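(* Let $X$ be a metric space and $A\subset X$. The following are equivalent: (1) the characteristic function $\chi_A$ of $A$ is glacially oscillating; (2) $A$ is coarsely clopen; (3) there is a glacial scale $\mathcal S$ such that every $\mathcal S$-chain starting at a point of $A$ is entirely contained in $A$.
   Context: A function $g:X\to\mathbb R$ is slowly oscillating if for all $r,\epsilon>0$ there is a bounded $K\subset X$ such that $x,y\in X\setminus K$ and $d(x,y)<r$ imply $|g(x)-g(y)|<\epsilon$. A subset $A$ of a metric space $X$ is coarsely clopen if $\chi_A$ is slowly oscillating (i.e. $A$ and $X\setminus A$ are coarsely disjoint). A glacial scale on $X$ is a sequence $\mathcal S=\{(K_i,n_i)\}_{i\ge1}$ of pairs, each $K_i$ a bounded subset of $X$ and $n_i$ a natural number, such that for every bounded $K\subset X$ and every $r>0$ there is $i$ with $K\subset K_i$ and $n_i>r$. An $\mathcal S$-chain is a finite sequence $x_1,\dots,x_n$ in $X$ such that for each $i\le n-1$ there is $m\ge1$ with $x_i,x_{i+1}\notin K_m$ and $d(x_i,x_{i+1})\le n_m$. A function $f:X\to\mathbb R$ is glacially oscillating if for every $\epsilon>0$ there is a glacial scale $\mathcal S$ such that $|f(x_1)-f(x_n)|<\epsilon$ for every $\mathcal S$-chain $x_1,\dots,x_n$. *)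

theory Defs
  imports "HOL-Analysis.Analysis"
begin

definition slowly_oscillating :: "('a::metric_space \<Rightarrow> real) \<Rightarrow> bool" where
  "slowly_oscillating g \<longleftrightarrow>
     (\<forall>r>0. \<forall>\<epsilon>>0. \<exists>K. bounded K \<and>
        (\<forall>x y. x \<notin> K \<longrightarrow> y \<notin> K \<longrightarrow> dist x y < r \<longrightarrow> \<bar>g x - g y\<bar> < \<epsilon>))"

definition coarsely_clopen :: "'a::metric_space set \<Rightarrow> bool" where
  "coarsely_clopen A \<longleftrightarrow> slowly_oscillating (indicator A :: 'a \<Rightarrow> real)"

text \<open>A glacial scale: a sequence of pairs (K_i, n_i), indexed by nat (starting at 0
  instead of 1, which is immaterial).\<close>
definition glacial_scale :: "(nat \<Rightarrow> 'a::metric_space set \<times> nat) \<Rightarrow> bool" where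
  "glacial_scale S \<longleftrightarrow>
     (\<forall>i. bounded (fst (S i))) \<and>
     (\<forall>K. bounded K \<longrightarrow> (\<forall>r>0::real. \<exists>i. K \<subseteq> fst (S i) \<and> real (snd (S i)) > r))"

definition S_chain :: "(nat \<Rightarrow> 'a::metric_space set \<times> nat) \<Rightarrow> 'a list \<Rightarrow> bool" where
  "S_chain S xs \<longleftrightarrow> xs \<noteq> [] \<and>
     (\<forall>i. Suc i < length xs \<longrightarrow>
        (\<exists>m. xs ! i \<notin> fst (S m) \<and> xs ! Suc i \<notin> fst (S m) \<and>
             dist (xs ! i) (xs ! Suc i) \<le> real (snd (S m))))"

definition glacially_oscillating :: "('a::metric_space \<Rightarrow> real) \<Rightarrow> bool" where
  "glacially_oscillating f \<longleftrightarrow>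
     (\<forall>\<epsilon>>0. \<exists>S. glacial_scale S \<and>
        (\<forall>xs. S_chain S xs \<longrightarrow> \<bar>f (hd xs) - f (last xs)\<bar> < \<epsilon>))"

end

theory Submission
  imports Defs
begin

lemma two_chain:
  assumes "x \<notin> fst (S i)" "y \<notin> fst (S i)" "dist x y \<le> real (snd (S i))"
  shows "S_chain S [x, y]"
  unfolding S_chain_def using assms
  by (auto simp: less_Suc_eq nth_Cons split: nat.splits)

lemma scale_big:
  assumes "glacial_scale S" "r > 0"
  shows "\<exists>i. bounded (fst (S i)) \<and> real (snd (S i)) > r"
  using assms unfolding glacial_scale_def by (metis bounded_empty)

lemma chain_cc:
  assumes "glacial_scale S" and ch: "\<And>x y i. x \<notin> fst (S i) \<Longrightarrow> y \<notin> fst (S i)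
     \<Longrightarrow> dist x y \<le> real (snd (S i)) \<Longrightarrow> x \<in> A \<Longrightarrow> y \<in> A"
  shows "coarsely_clopen A"
  unfolding coarsely_clopen_def slowly_oscillating_def
proof (intro allI impI)
  fix r \<epsilon> :: real assume r: "r > 0" and e: "\<epsilon> > 0"
  obtain i where i: "bounded (fst (S i))" "real (snd (S i)) > r"
    using scale_big[OF assms(1) r] by blast
  show "\<exists>K. bounded K \<and> (\<forall>x y. x \<notin> K \<longrightarrow> y \<notin> K \<longrightarrow> dist x y < r \<longrightarrow>
          \<bar>indicator A x - indicator A y\<bar> < \<epsilon>)"
  proof (intro exI conjI allI impI)
    fix x y assume h: "x \<notin> fst (S i)" "y \<notin> fst (S i)" "dist x y < r"
    have "x \<in> A \<longleftrightarrow> y \<in> A"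
      using ch[of x i y] ch[of y i x] h i by (auto simp: dist_commute)
    then show "\<bar>indicator A x - indicator A y\<bar> < (\<epsilon>::real)" using e
      by (auto simp: indicator_def)
  qed (use i in auto)
qed

lemma cc_scale:
  assumes "coarsely_clopen A"
  shows "\<exists>S. glacial_scale S \<and> (\<forall>xs. S_chain S xs \<longrightarrow> (\<forall>x\<in>set xs. x \<in> A \<longleftrightarrow> hd xs \<in> A))"
proof -
  have "\<forall>n::nat. \<exists>K. bounded K \<and> (\<forall>x y. x \<notin> K \<longrightarrow> y \<notin> K \<longrightarrow> dist x y < real n + 1 \<longrightarrow>
          \<bar>indicator A x - indicator A y\<bar> < (1::real))"
  proof
    fix n :: nat
    have h: "\<forall>r>0. \<forall>\<epsilon>>0. \<exists>K. bounded K \<and> (\<forall>x y. x \<notin> K \<longrightarrow> y \<notin> K \<longrightarrow> dist x y < r \<longrightarrow>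
          \<bar>indicator A x - indicator A y\<bar> < (\<epsilon>::real))"
      using assms unfolding coarsely_clopen_def slowly_oscillating_def .
    have "real n + 1 > 0" by simp
    from h[rule_format, OF this zero_less_one]
    show "\<exists>K. bounded K \<and> (\<forall>x y. x \<notin> K \<longrightarrow> y \<notin> K \<longrightarrow> dist x y < real n + 1 \<longrightarrow>
          \<bar>indicator A x - indicator A y\<bar> < (1::real))" .
  qed
  then obtain K where K0: "\<forall>n. bounded (K n) \<and> (\<forall>x y. x \<notin> K n \<longrightarrow> y \<notin> K n \<longrightarrow> dist x y < real n + 1 \<longrightarrow>
          \<bar>indicator A x - indicator A y\<bar> < (1::real))"
    by (rule choice[THEN exE]) blast
  have K: "\<And>n. bounded (K n)"
    "\<And>n x y. x \<notin> K n \<Longrightarrow> y \<notin> K n \<Longrightarrow> dist x y < real n + 1 \<Longrightarrow>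
          \<bar>indicator A x - indicator A y\<bar> < (1::real)"
    using K0 by blast+
  define x0 :: 'a where "x0 = undefined"
  define S where "S n = (cball x0 (real n) \<union> K n, n)" for n
  have gs: "glacial_scale S"
    unfolding glacial_scale_def
  proof (intro conjI allI impI)
    fix i show "bounded (fst (S i))" using K(1) by (simp add: S_def)
  next
    fix L :: "'a set" and r :: real assume L: "bounded L" and r: "r > 0"
    obtain R where R: "\<forall>y\<in>L. dist x0 y \<le> R" using L bounded_any_center by blast
    obtain i :: nat where i: "max R r < real i" using reals_Archimedean2 by blast
    have "L \<subseteq> cball x0 (real i)"
    proof
      fix y assume "y \<in> L"
      then have "dist x0 y \<le> R" using R by blast
      then show "y \<in> cball x0 (real i)" using i by simp
    qed
    then have "L \<subseteq> fst (S i)" by (auto simp: S_def)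
    moreover have "real (snd (S i)) > r" using i by (simp add: S_def)
    ultimately show "\<exists>i. L \<subseteq> fst (S i) \<and> real (snd (S i)) > r" by blast
  qed
  have step: "x \<in> A \<longleftrightarrow> y \<in> A" if "x \<notin> fst (S m)" "y \<notin> fst (S m)"
    "dist x y \<le> real (snd (S m))" for x y m
  proof -
    have "\<bar>indicator A x - indicator A y\<bar> < (1::real)"
      using K(2)[of x m y] that by (simp add: S_def)
    then show ?thesis by (auto simp: indicator_def split: if_splits)
  qed
  have "\<forall>x\<in>set xs. x \<in> A \<longleftrightarrow> hd xs \<in> A" if c: "S_chain S xs" for xs
  proof -
    have ne: "xs \<noteq> []" using c unfolding S_chain_def by (rule conjunct1)
    have cc: "\<forall>i. Suc i < length xs \<longrightarrow>
        (\<exists>m. xs ! i \<notin> fst (S m) \<and> xs ! Suc i \<notin> fst (S m) \<and>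
             dist (xs ! i) (xs ! Suc i) \<le> real (snd (S m)))" using c unfolding S_chain_def by (rule conjunct2)
    have "\<forall>j. j < length xs \<longrightarrow> (xs ! j \<in> A \<longleftrightarrow> xs ! 0 \<in> A)"
    proof (intro allI)
      fix j show "j < length xs \<longrightarrow> (xs ! j \<in> A \<longleftrightarrow> xs ! 0 \<in> A)"
      proof (induction j)
        case (Suc j)
        show ?case
        proof
          assume "Suc j < length xs"
          from cc[rule_format, OF this] obtain m where "xs ! j \<notin> fst (S m)" "xs ! Suc j \<notin> fst (S m)"
            "dist (xs ! j) (xs ! Suc j) \<le> real (snd (S m))"
            by (elim exE conjE)
          then have "xs ! j \<in> A \<longleftrightarrow> xs ! Suc j \<in> A" by (rule step)
          moreover have "xs ! j \<in> A \<longleftrightarrow> xs ! 0 \<in> A"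
            using Suc.IH \<open>Suc j < length xs\<close> by simp
          ultimately show "xs ! Suc j \<in> A \<longleftrightarrow> xs ! 0 \<in> A" by blast
        qed
      qed simp
    qed
    note all = this
    show ?thesis
    proof
      fix x assume "x \<in> set xs"
      then obtain j where j: "j < length xs" "x = xs ! j" by (auto simp: in_set_conv_nth)
      have "hd xs = xs ! 0" using ne by (rule hd_conv_nth)
      then show "x \<in> A \<longleftrightarrow> hd xs \<in> A" using all j by simp
    qed
  qed
  then show ?thesis using gs by blast
qed

theorem proposition3p11:
  fixes A :: "'a::metric_space set"
  shows "(glacially_oscillating (indicator A :: 'a \<Rightarrow> real) \<longleftrightarrow> coarsely_clopen A)
       \<and> (coarsely_clopen A \<longleftrightarrow>
           (\<exists>S. glacial_scale S \<and> (\<forall>xs. S_chain S xs \<longrightarrow> hd xs \<in> A \<longrightarrow> set xs \<subseteq> A)))"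
proof (intro conjI iffI)
  assume "glacially_oscillating (indicator A :: 'a \<Rightarrow> real)"
  then obtain S where S: "glacial_scale S"
    "\<And>xs. S_chain S xs \<Longrightarrow> \<bar>indicator A (hd xs) - indicator A (last xs)\<bar> < (1::real)"
    unfolding glacially_oscillating_def by (meson zero_less_one)
  show "coarsely_clopen A"
  proof (rule chain_cc[OF S(1)])
    fix x y i assume h: "x \<notin> fst (S i)" "y \<notin> fst (S i)" "dist x y \<le> real (snd (S i))" "x \<in> A"
    have "\<bar>indicator A x - indicator A y\<bar> < (1::real)"
      using S(2)[OF two_chain[of x S i y, OF h(1-3)]] by simp
    then show "y \<in> A" using h(4) by (auto simp: indicator_def split: if_splits)
  qed
next
  assume "coarsely_clopen A"
  then obtain S where S: "glacial_scale S"
    "\<And>xs. S_chain S xs \<Longrightarrow> (\<forall>x\<in>set xs. x \<in> A \<longleftrightarrow> hd xs \<in> A)"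
    using cc_scale by blast
  show "glacially_oscillating (indicator A :: 'a \<Rightarrow> real)"
    unfolding glacially_oscillating_def
  proof (intro allI impI)
    fix \<epsilon> :: real assume e: "\<epsilon> > 0"
    have "\<forall>xs. S_chain S xs \<longrightarrow> \<bar>indicator A (hd xs) - indicator A (last xs)\<bar> < \<epsilon>"
    proof (intro allI impI)
      fix xs assume c: "S_chain S xs"
      then have "xs \<noteq> []" unfolding S_chain_def by (rule conjunct1)
      then have "last xs \<in> set xs" by simp
      then have "last xs \<in> A \<longleftrightarrow> hd xs \<in> A" using S(2)[OF c] by blast
      then show "\<bar>indicator A (hd xs) - indicator A (last xs)\<bar> < \<epsilon>"
        using e by (auto simp: indicator_def)
    qed
    then show "\<exists>S. glacial_scale S \<and> (\<forall>xs. S_chain S xs \<longrightarrow> \<bar>indicator A (hd xs) - indicator A (last xs)\<bar> < \<epsilon>)"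
      using S(1) by blast
  qed
next
  assume "coarsely_clopen A"
  then obtain S where S: "glacial_scale S"
    "\<And>xs. S_chain S xs \<Longrightarrow> (\<forall>x\<in>set xs. x \<in> A \<longleftrightarrow> hd xs \<in> A)"
    using cc_scale by blast
  show "\<exists>S. glacial_scale S \<and> (\<forall>xs. S_chain S xs \<longrightarrow> hd xs \<in> A \<longrightarrow> set xs \<subseteq> A)"
    using S by blast
next
  assume "\<exists>S. glacial_scale S \<and> (\<forall>xs. S_chain S xs \<longrightarrow> hd xs \<in> A \<longrightarrow> set xs \<subseteq> A)"
  then obtain S where S: "glacial_scale S"
    "\<And>xs. S_chain S xs \<Longrightarrow> hd xs \<in> A \<Longrightarrow> set xs \<subseteq> A" by blast
  show "coarsely_clopen A"
  proof (rule chain_cc[OF S(1)])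
    fix x y i assume h: "x \<notin> fst (S i)" "y \<notin> fst (S i)" "dist x y \<le> real (snd (S i))" "x \<in> A"
    show "y \<in> A" using S(2)[OF two_chain[of x S i y, OF h(1-3)]] h(4) by simp
  qed
qed

end
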